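(* There is a bijection $F : C_{n+1} \to S_n$ such that for each $\pi \in C_{n+1}$ and each $\ell \in [n]$, $\mathrm{Exc}(\pi) = \{1,\dots,\ell\}$ if and only if $\mathrm{DesBot}(F(\pi)) = \{1,\dots,\ell-1\}$.
   Context: $C_{n+1}$ is the set of $(n+1)$-cycles, i.e. permutations of $[n+1]$ consisting of a single cycle of length $n+1$. For $\pi \in S_{n+1}$, $\mathrm{Exc}(\pi) = \{i \in [n] : \pi(i) > i\}$. For $p \in S_n$, the descent bottoms set is $\mathrm{DesBot}(p) = \{p(i) : 2\le i\le n,\ p(i) < p(i-1)\}$. *)

theory Defs
  imports "HOL-Combinatorics.Combinatorics"
begin

definition perms :: "nat \<Rightarrow> (nat \<Rightarrow> nat) set" where
  "perms m = {p. p permutes {1..m}}"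

definition cycles :: "nat \<Rightarrow> (nat \<Rightarrow> nat) set" where
  "cycles m = {p. p permutes {1..m} \<and> {(p ^^ k) 1 | k. True} = {1..m}}"

definition Exc :: "nat \<Rightarrow> (nat \<Rightarrow> nat) \<Rightarrow> nat set" where
  "Exc n \<pi> = {i \<in> {1..n}. \<pi> i > i}"

definition DesBot :: "nat \<Rightarrow> (nat \<Rightarrow> nat) \<Rightarrow> nat set" where
  "DesBot n p = {p i | i. 2 \<le> i \<and> i \<le> n \<and> p i < p (i - 1)}"

end

theory Submission imports Defs begin

lemma cyc_facts:
  assumes "\<pi> \<in> cycles (n+1)"
  shows "(\<pi>^^(n+1)) 1 = 1" "inj_on (\<lambda>k. (\<pi>^^k) 1) {0..n}"
    "(\<lambda>k. (\<pi>^^k) 1) ` {0..n} = {1..n+1}" "\<pi> permutes {1..n+1}"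
proof -
  have pp: "\<pi> permutes {1..n+1}" and orb: "{(\<pi> ^^ k) 1 | k. True} = {1..n+1}"
    using assms by (auto simp: cycles_def)
  have perm: "permutation \<pi>" using pp by (auto simp: permutation_permutes)
  have o: "orbit \<pi> 1 = {1..n+1}" using orbit_altdef_permutation[OF perm] orb by simp
  have self: "1 \<in> orbit \<pi> 1" using o by simp
  define d where "d = funpow_dist1 \<pi> 1 1"
  have img: "orbit \<pi> 1 = (\<lambda>k. (\<pi>^^k) 1) ` {0..<d}"
    using orbit_conv_funpow_dist1[OF self] d_def by simp
  have inj: "inj_on (\<lambda>k. (\<pi>^^k) 1) {0..<d}" using inj_on_funpow_dist1[OF self] d_def by simp
  have "card (orbit \<pi> 1) = card {0..<d}" unfolding img by (rule card_image[OF inj])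
  hence "card (orbit \<pi> 1) = d" by simp
  hence dn: "d = n+1" using o by simp
  have e: "{0..<d} = {0..n}" using dn by auto
  have "(\<pi> ^^ d) 1 = 1" unfolding d_def by (rule funpow_dist1_prop[OF self])
  then show "(\<pi>^^(n+1)) 1 = 1" by (simp only: dn)
  show "inj_on (\<lambda>k. (\<pi>^^k) 1) {0..n}" using inj e by simp
  show "(\<lambda>k. (\<pi>^^k) 1) ` {0..n} = {1..n+1}" using img e o by simp
  show "\<pi> permutes {1..n+1}" by (fact pp)
qed

lemma sub1_inj: "(a::nat) \<ge> 1 \<Longrightarrow> b \<ge> 1 \<Longrightarrow> a - 1 = b - 1 \<Longrightarrow> a = b" by arith

definition Fmap :: "nat \<Rightarrow> (nat \<Rightarrow> nat) \<Rightarrow> nat \<Rightarrow> nat" where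
  "Fmap n \<pi> i = (if i \<in> {1..n} then (\<pi> ^^ (n+1-i)) 1 - 1 else i)"

lemma cyc_s:
  assumes "\<pi> \<in> cycles (n+1)"
  shows "k \<le> n \<Longrightarrow> (\<pi>^^k) 1 \<in> {1..n+1}"
    "1 \<le> k \<Longrightarrow> k \<le> n \<Longrightarrow> (\<pi>^^k) 1 \<noteq> 1"
    "\<pi> ((\<pi>^^k) 1) = (\<pi>^^(Suc k)) 1"
    "a \<in> {1..n+1} \<Longrightarrow> \<exists>j\<le>n. a = (\<pi>^^j) 1"
    "j \<le> n \<Longrightarrow> k \<le> n \<Longrightarrow> (\<pi>^^j) 1 = (\<pi>^^k) 1 \<Longrightarrow> j = k"
proof -
  note f = cyc_facts[OF assms]
  show "k \<le> n \<Longrightarrow> (\<pi>^^k) 1 \<in> {1..n+1}"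
  proof -
    assume k: "k \<le> n"
    have "(\<pi>^^k) 1 \<in> (\<lambda>k. (\<pi>^^k) 1) ` {0..n}" using k by (intro imageI) simp
    then show ?thesis by (simp only: f(3))
  qed
  have injf: "\<And>j k. j \<le> n \<Longrightarrow> k \<le> n \<Longrightarrow> (\<pi>^^j) 1 = (\<pi>^^k) 1 \<Longrightarrow> j = k"
  proof -
    fix j k assume "j \<le> n" "k \<le> n" "(\<pi>^^j) 1 = (\<pi>^^k) 1"
    moreover have "j \<in> {0..n}" "k \<in> {0..n}" using calculation by auto
    ultimately show "j = k" using inj_onD[OF f(2), of j k] by simp
  qed
  show "j \<le> n \<Longrightarrow> k \<le> n \<Longrightarrow> (\<pi>^^j) 1 = (\<pi>^^k) 1 \<Longrightarrow> j = k" by (rule injf)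
  show "1 \<le> k \<Longrightarrow> k \<le> n \<Longrightarrow> (\<pi>^^k) 1 \<noteq> 1"
  proof
    assume "1 \<le> k" "k \<le> n" "(\<pi>^^k) 1 = 1"
    then have "(\<pi>^^k) 1 = (\<pi>^^0) 1" by simp
    then have "k = 0" using injf[of k 0] \<open>k \<le> n\<close> by simp
    then show False using \<open>1 \<le> k\<close> by simp
  qed
  show "\<pi> ((\<pi>^^k) 1) = (\<pi>^^(Suc k)) 1" by simp
  show "a \<in> {1..n+1} \<Longrightarrow> \<exists>j\<le>n. a = (\<pi>^^j) 1"
  proof -
    assume "a \<in> {1..n+1}"
    then have "a \<in> (\<lambda>k. (\<pi>^^k) 1) ` {0..n}" by (simp only: f(3))
    then obtain j where "j \<in> {0..n}" "a = (\<pi>^^j) 1" by (rule imageE)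
    then show ?thesis by auto
  qed
qed

lemma Fmap_in:
  assumes "i \<in> {1..n}" shows "Fmap n \<pi> i = (\<pi> ^^ (n+1-i)) 1 - 1"
  using assms by (simp add: Fmap_def)

lemma exc_char:
  assumes cy: "\<pi> \<in> cycles (n+1)" and n1: "n \<ge> 1"
  shows "x \<in> Exc n \<pi> \<longleftrightarrow> x = 1 \<or> (x \<ge> 2 \<and> x - 1 \<in> DesBot n (Fmap n \<pi>))"
proof -
  note s = cyc_s[OF cy]
  have sn1: "(\<pi>^^(n+1)) 1 = 1" using cyc_facts[OF cy] by simp
  show ?thesis
  proof
    assume x: "x \<in> Exc n \<pi>"
    hence xr: "x \<in> {1..n}" "x < \<pi> x" by (auto simp: Exc_def)
    show "x = 1 \<or> (x \<ge> 2 \<and> x - 1 \<in> DesBot n (Fmap n \<pi>))"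
    proof (cases "x = 1")
      case False
      obtain j where j: "j \<le> n" "x = (\<pi>^^j) 1" using s(4)[of x] xr by auto
      have j0: "j \<noteq> 0" using False j by (cases j) auto
      have jn: "j \<noteq> n" using j xr sn1 by auto
      define i where "i = n + 1 - j"
      have i: "2 \<le> i" "i \<le> n" "n+1-i = j" "n + 1 - (i - 1) = Suc j" using j j0 jn i_def by auto
      have a: "Fmap n \<pi> i = x - 1" using i j by (simp add: Fmap_def)
      have b: "Fmap n \<pi> (i - 1) = \<pi> x - 1" proof - have "i - 1 \<in> {1..n}" using i by auto thus ?thesis using Fmap_in[of "i-1" n \<pi>] i j by simp qed
      have "x \<ge> 2" using False xr by auto
      moreover have "x - 1 \<in> DesBot n (Fmap n \<pi>)"
      proof -
        have "Fmap n \<pi> i < Fmap n \<pi> (i - 1)" using a b xr \<open>x \<ge> 2\<close> by simp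
        then show ?thesis unfolding DesBot_def mem_Collect_eq using i(1,2) a
          by (intro exI[of _ i]) simp
      qed
      ultimately show ?thesis by simp
    qed simp
  next
    assume h: "x = 1 \<or> (x \<ge> 2 \<and> x - 1 \<in> DesBot n (Fmap n \<pi>))"
    show "x \<in> Exc n \<pi>"
    proof (cases "x = 1")
      case True
      have "\<pi> 1 \<in> {1..n+1}" "\<pi> 1 \<noteq> 1" using s(1)[of 1] s(2)[of 1] n1 by auto
      then show ?thesis using True n1 by (auto simp: Exc_def)
    next
      case False
      with h have x2: "x \<ge> 2" and "x - 1 \<in> DesBot n (Fmap n \<pi>)" by auto
      then obtain i where i: "2 \<le> i" "i \<le> n" "x - 1 = Fmap n \<pi> i" "Fmap n \<pi> i < Fmap n \<pi> (i - 1)"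
        unfolding DesBot_def by auto
      define j where "j = n + 1 - i"
      have jj: "1 \<le> j" "j < n" "n + 1 - (i - 1) = Suc j" using i j_def by auto
      have sj: "(\<pi>^^j) 1 \<in> {1..n+1}" "(\<pi>^^j) 1 \<noteq> 1" using s(1)[of j] s(2)[of j] jj by auto
      have sj1: "(\<pi>^^(Suc j)) 1 \<in> {1..n+1}" "(\<pi>^^(Suc j)) 1 \<noteq> 1" using s(1)[of "Suc j"] s(2)[of "Suc j"] jj by auto
      have a: "Fmap n \<pi> i = (\<pi>^^j) 1 - 1" using i j_def by (simp add: Fmap_def)
      have im: "i - 1 \<in> {1..n}" using i by auto
      have b: "Fmap n \<pi> (i - 1) = (\<pi>^^(Suc j)) 1 - 1"
        using Fmap_in[OF im, of \<pi>] jj(3) by simp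
      have xe: "x = (\<pi>^^j) 1" using a i(3) x2 sj by auto
      have lt: "x < \<pi> x" using xe a b i(4) sj sj1 by auto
      have "x \<le> n" using lt xe sj1 by auto
      then show ?thesis using lt x2 by (auto simp: Exc_def)
    qed
  qed
qed

lemma final_eq:
  fixes D E :: "nat set"
  assumes "\<And>x. x \<in> E \<longleftrightarrow> x = 1 \<or> (x \<ge> 2 \<and> x - 1 \<in> D)" "0 \<notin> D" "l \<ge> 1"
  shows "E = {1..l} \<longleftrightarrow> D = {1..l - 1}"
proof
  assume e: "E = {1..l}"
  show "D = {1..l - 1}"
  proof (intro set_eqI iffI)
    fix y assume "y \<in> D"
    hence "Suc y \<in> E" using assms(1)[of "Suc y"] assms(2) by (cases y) auto
    then show "y \<in> {1..l-1}" using e \<open>y \<in> D\<close> assms(2) by (cases y) auto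
  next
    fix y assume "y \<in> {1..l-1}"
    hence "Suc y \<in> E" using e by auto
    then show "y \<in> D" using assms(1)[of "Suc y"] \<open>y \<in> {1..l-1}\<close> by auto
  qed
next
  assume "D = {1..l - 1}"
  show "E = {1..l}"
  proof (intro set_eqI)
    fix x show "x \<in> E \<longleftrightarrow> x \<in> {1..l}"
      using assms(1)[of x] assms(3) \<open>D = {1..l - 1}\<close> by (cases x) auto
  qed
qed


lemma Fmap_perm:
  assumes cy: "\<pi> \<in> cycles (n+1)"
  shows "Fmap n \<pi> \<in> perms n"
proof -
  note s = cyc_s[OF cy]
  have into: "Fmap n \<pi> ` {1..n} \<subseteq> {1..n}"
  proof
    fix y assume "y \<in> Fmap n \<pi> ` {1..n}"
    then obtain i where i: "i \<in> {1..n}" "y = Fmap n \<pi> i" by auto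
    have k: "1 \<le> n+1-i" "n+1-i \<le> n" using i by auto
    have "(\<pi>^^(n+1-i)) 1 \<in> {1..n+1}" "(\<pi>^^(n+1-i)) 1 \<noteq> 1"
      using s(1)[OF k(2)] s(2)[OF k] by auto
    then show "y \<in> {1..n}" using i Fmap_in[of i n \<pi>] by auto
  qed
  have inj: "inj_on (Fmap n \<pi>) {1..n}"
  proof (rule inj_onI)
    fix i i' assume i: "i \<in> {1..n}" "i' \<in> {1..n}" "Fmap n \<pi> i = Fmap n \<pi> i'"
    have k: "1 \<le> n+1-i" "n+1-i \<le> n" "1 \<le> n+1-i'" "n+1-i' \<le> n" using i by auto
    have "(\<pi>^^(n+1-i)) 1 \<noteq> 1" "(\<pi>^^(n+1-i')) 1 \<noteq> 1"
      "(\<pi>^^(n+1-i)) 1 \<in> {1..n+1}" "(\<pi>^^(n+1-i')) 1 \<in> {1..n+1}"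
      using s(1)[OF k(2)] s(2)[OF k(1,2)] s(1)[OF k(4)] s(2)[OF k(3,4)] by auto
    moreover have "(\<pi>^^(n+1-i)) 1 - 1 = (\<pi>^^(n+1-i')) 1 - 1"
      using i Fmap_in[of i n \<pi>] Fmap_in[of i' n \<pi>] by simp
    ultimately have "(\<pi>^^(n+1-i)) 1 = (\<pi>^^(n+1-i')) 1"
      by (meson sub1_inj atLeastAtMost_iff)
    hence "n+1-i = n+1-i'" using s(5)[of "n+1-i" "n+1-i'"] i by auto
    then show "i = i'" using i by auto
  qed
  have bj: "bij_betw (Fmap n \<pi>) {1..n} {1..n}"
    using endo_inj_surj[OF _ into inj] inj by (simp add: bij_betw_def)
  have fx: "\<And>x. x \<notin> {1..n} \<Longrightarrow> Fmap n \<pi> x = x" by (auto simp: Fmap_def)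
  have "Fmap n \<pi> permutes {1..n}" by (rule bij_imp_permutes[OF bj fx])
  then show ?thesis unfolding perms_def by simp
qed

lemma Fmap_inj:
  assumes cy: "\<pi> \<in> cycles (n+1)" and cy2: "\<sigma> \<in> cycles (n+1)" and eq: "Fmap n \<pi> = Fmap n \<sigma>"
  shows "\<pi> = \<sigma>"
proof -
  note s = cyc_s[OF cy] and t = cyc_s[OF cy2]
  have pw: "(\<pi>^^k) 1 = (\<sigma>^^k) 1" if k: "k \<le> n + 1" for k
  proof -
    consider "k = 0" | "k = n + 1" | "1 \<le> k \<and> k \<le> n" using k by linarith
    then show ?thesis
    proof cases
      case 2 then show ?thesis using cyc_facts(1)[OF cy] cyc_facts(1)[OF cy2] by simp
    next
      case 3
      define i where "i = n + 1 - k"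
      have i: "i \<in> {1..n}" "n + 1 - i = k" using 3 i_def by auto
      have "Fmap n \<pi> i = Fmap n \<sigma> i" using eq by simp
      hence "(\<pi>^^(n+1-i)) 1 - 1 = (\<sigma>^^(n+1-i)) 1 - 1" using Fmap_in[OF i(1)] by simp
      hence "(\<pi>^^k) 1 - 1 = (\<sigma>^^k) 1 - 1" using i(2) by simp
      moreover have "(\<pi>^^k) 1 \<in> {1..n+1}" "(\<sigma>^^k) 1 \<in> {1..n+1}" using s(1) t(1) 3 by auto
      ultimately show ?thesis by (meson sub1_inj atLeastAtMost_iff)
    qed simp
  qed
  show ?thesis
  proof
    fix x
    show "\<pi> x = \<sigma> x"
    proof (cases "x \<in> {1..n+1}")
      case True
      then obtain j where j: "j \<le> n" "x = (\<pi>^^j) 1" using s(4) by blast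
      have "x = (\<sigma>^^j) 1" using pw[of j] j by simp
      then have "\<sigma> x = (\<sigma>^^(Suc j)) 1" by simp
      moreover have "\<pi> x = (\<pi>^^(Suc j)) 1" using j by simp
      moreover have "(\<pi>^^(Suc j)) 1 = (\<sigma>^^(Suc j)) 1" using pw[of "Suc j"] j by simp
      ultimately show ?thesis by simp
    next
      case False
      then show ?thesis using cyc_facts(4)[OF cy] cyc_facts(4)[OF cy2]
        by (simp add: permutes_not_in)
    qed
  qed
qed

lemma Fmap_surj:
  assumes p: "p \<in> perms n"
  shows "\<exists>\<pi> \<in> cycles (n+1). Fmap n \<pi> = p"
proof -
  have pp: "p permutes {1..n}" using p by (simp add: perms_def)
  define cs where "cs = 1 # map (\<lambda>j. p (n+1-j) + 1) [1..<n+1]"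
  have len: "length cs = n + 1" by (simp add: cs_def)
  have nth: "cs ! m = p (n+1-m) + 1" if m1: "1 \<le> m" and m2: "m \<le> n" for m
  proof -
    have u: "[1..<n+1] ! (m - 1) = m" using m1 m2 by (subst nth_upt) auto
    have "cs ! m = map (\<lambda>j. p (n+1-j) + 1) [1..<n+1] ! (m - 1)"
      using m1 by (cases m) (simp_all add: cs_def del: upt_Suc)
    also have "\<dots> = p (n+1-([1..<n+1] ! (m - 1))) + 1"
      using m1 m2 by (subst nth_map) (simp_all del: upt_Suc)
    also have "\<dots> = p (n+1-m) + 1" by (simp only: u)
    finally show ?thesis .
  qed
  have nth0: "cs ! 0 = 1" by (simp add: cs_def)
  have pimg: "p ` {1..n} = {1..n}" using pp by (simp add: permutes_image)
  have pinj: "inj_on p {1..n}" using pp by (meson permutes_inj_on)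
  have setcs: "set cs = {1..n+1}"
  proof (intro set_eqI iffI)
    fix x assume "x \<in> set cs"
    then obtain m where m: "m < n + 1" "x = cs ! m" using len by (metis in_set_conv_nth)
    show "x \<in> {1..n+1}"
    proof (cases "m = 0")
      case True then show ?thesis using m nth0 by simp
    next
      case False
      have k: "n + 1 - m \<in> {1..n}" using False m by auto
      have "p (n+1-m) \<in> {1..n}" by (rule permutes_in_image[OF pp, THEN iffD2, OF k])
      then show ?thesis using m nth[of m] False by simp
    qed
  next
    fix x assume x: "x \<in> {1..n+1}"
    show "x \<in> set cs"
    proof (cases "x = 1")
      case True then show ?thesis by (simp add: cs_def)
    next
      case False
      then have "x - 1 \<in> {1..n}" using x by auto
      then obtain i where i: "i \<in> {1..n}" "x - 1 = p i" using pimg by (metis imageE)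
      define m where "m = n + 1 - i"
      have m: "1 \<le> m" "m \<le> n" "n + 1 - m = i" using i m_def by auto
      have "cs ! m = p i + 1" using nth[OF m(1,2)] m(3) by simp
      moreover have "p i + 1 = x" using i(2) False x by auto
      ultimately have "cs ! m = x" by simp
      moreover have "m < length cs" using m len by simp
      ultimately show ?thesis by (metis nth_mem)
    qed
  qed
  have dist: "distinct cs"
  proof -
    have "card (set cs) = length cs" using setcs len by simp
    then show ?thesis by (simp add: card_distinct)
  qed
  define c where "c = cycle_of_list cs"
  have cperm: "c permutes {1..n+1}" using cycle_permutes[of cs] setcs c_def by simp
  have pow: "(c ^^ k) 1 = cs ! (k mod (n+1))" for k
  proof -
    have "map (c ^^ k) cs = rotate k cs" using cyclic_rotation[OF dist] c_def by simp
    hence "map (c ^^ k) cs ! 0 = rotate k cs ! 0" by simp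
    then show ?thesis using len nth0 nth_rotate[of 0 cs k] by simp
  qed
  have orb: "{(c ^^ k) 1 | k. True} = {1..n+1}"
  proof (intro set_eqI iffI)
    fix x assume "x \<in> {(c ^^ k) 1 | k. True}"
    then obtain k where "x = cs ! (k mod (n+1))" using pow by auto
    moreover have "k mod (n+1) < length cs" using len by simp
    ultimately show "x \<in> {1..n+1}" using setcs nth_mem by metis
  next
    fix x assume "x \<in> {1..n+1}"
    then obtain m where m: "m < n + 1" "x = cs ! m" using setcs len by (metis in_set_conv_nth)
    then have "x = (c ^^ m) 1" using pow by simp
    then show "x \<in> {(c ^^ k) 1 | k. True}" by blast
  qed
  have cc: "c \<in> cycles (n+1)" using cperm orb by (simp add: cycles_def)
  have "Fmap n c = p"
  proof
    fix i show "Fmap n c i = p i"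
    proof (cases "i \<in> {1..n}")
      case True
      have "(c ^^ (n+1-i)) 1 = cs ! (n+1-i)" using pow True by simp
      also have "\<dots> = p i + 1" using nth[of "n+1-i"] True by auto
      finally show ?thesis using True by (simp add: Fmap_def)
    next
      case False
      have "p i = i" using pp False by (simp add: permutes_not_in)
      moreover have "Fmap n c i = i" using False by (auto simp: Fmap_def)
      ultimately show ?thesis by simp
    qed
  qed
  then show ?thesis using cc by blast
qed

theorem mainTheorem8:
  fixes n :: nat
  shows "\<exists>F. bij_betw F (cycles (n + 1)) (perms n) \<and>
     (\<forall>\<pi> \<in> cycles (n + 1). \<forall>l \<in> {1..n}.
        Exc n \<pi> = {1..l} \<longleftrightarrow> DesBot n (F \<pi>) = {1..l - 1})"
proof (intro exI conjI)
  show "bij_betw (Fmap n) (cycles (n + 1)) (perms n)"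
    unfolding bij_betw_def
  proof
    show "inj_on (Fmap n) (cycles (n + 1))" using Fmap_inj by (meson inj_onI)
    show "Fmap n ` cycles (n + 1) = perms n"
      using Fmap_perm Fmap_surj by blast
  qed
  show "\<forall>\<pi> \<in> cycles (n + 1). \<forall>l \<in> {1..n}.
        Exc n \<pi> = {1..l} \<longleftrightarrow> DesBot n (Fmap n \<pi>) = {1..l - 1}"
  proof (intro ballI)
    fix \<pi> l assume cy: "\<pi> \<in> cycles (n + 1)" and l: "l \<in> {1..n}"
    have n1: "n \<ge> 1" using l by auto
    have z: "0 \<notin> DesBot n (Fmap n \<pi>)"
    proof
      assume "0 \<in> DesBot n (Fmap n \<pi>)"
      then obtain i where "2 \<le> i" "i \<le> n" "Fmap n \<pi> i = 0" unfolding DesBot_def by auto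
      moreover have "Fmap n \<pi> permutes {1..n}" using Fmap_perm[OF cy] by (simp add: perms_def)
      moreover have "i \<in> {1..n}" using calculation by auto
      ultimately have "Fmap n \<pi> i \<in> {1..n}" by (meson permutes_in_image)
      then show False using \<open>Fmap n \<pi> i = 0\<close> by simp
    qed
    show "Exc n \<pi> = {1..l} \<longleftrightarrow> DesBot n (Fmap n \<pi>) = {1..l - 1}"
      by (rule final_eq[OF exc_char[OF cy n1] z]) (use l in auto)
  qed
qed

end
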